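(* Let $S$ be an AG-groupoid with a zero element $0$. Let $\mathcal{D}$ be the set of all bi-ideals of $S$ and let $\Omega$ be the set of all strongly irreducible bi-ideals $J$ of $S$ with $J\neq S$. For $B\in\mathcal{D}$ put $O_{B}=\{J\in\Omega: B\not\subseteq J\}$. Then $\Gamma(\Omega)=\{O_{B}: B\in\mathcal{D}\}$ is a topology on $\Omega$. Moreover, the map $\phi:\mathcal{D}\to\Gamma(\Omega)$, $\phi(B)=O_{B}$, preserves finite intersections and arbitrary unions, in the sense that $\phi(B_{1}\cap B_{2})=\phi(B_{1})\cap\phi(B_{2})$ for all $B_1,B_2\in\mathcal D$ and $\phi(\langle\bigcup_{\alpha}B_{\alpha}\rangle)=\bigcup_{\alpha}\phi(B_{\alpha})$ for every family $\{B_\alpha\}\subseteq\mathcal D$, where $\langle X\rangle$ denotes the bi-ideal of $S$ generated by $X$ (the smallest bi-ideal containing $X$).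
   Context: An AG-groupoid is a set $S$ with a binary operation satisfying $(ab)c=(cb)a$ for all $a,b,c\in S$. A zero element is an element $0$ with $0s=s0=0$ for all $s\in S$. For nonempty subsets, $AB=\{ab:a\in A,b\in B\}$. A bi-ideal of $S$ is a nonempty subset $B$ with $BB\subseteq B$ and $(BS)B\subseteq B$. A bi-ideal $B$ is strongly irreducible if for all bi-ideals $B_{1},B_{2}$ of $S$, $B_{1}\cap B_{2}\subseteq B$ implies $B_{1}\subseteq B$ or $B_{2}\subseteq B$. *)

theory Defs
  imports "HOL-Analysis.Analysis"
begin

definition AG_groupoid :: "('a \<Rightarrow> 'a \<Rightarrow> 'a) \<Rightarrow> bool" where
  "AG_groupoid m \<longleftrightarrow> (\<forall>a b c. m (m a b) c = m (m c b) a)"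

definition is_zero :: "('a \<Rightarrow> 'a \<Rightarrow> 'a) \<Rightarrow> 'a \<Rightarrow> bool" where
  "is_zero m z \<longleftrightarrow> (\<forall>s. m z s = z \<and> m s z = z)"

definition setmult :: "('a \<Rightarrow> 'a \<Rightarrow> 'a) \<Rightarrow> 'a set \<Rightarrow> 'a set \<Rightarrow> 'a set" where
  "setmult m A B = {m a b | a b. a \<in> A \<and> b \<in> B}"

definition bi_ideal :: "('a \<Rightarrow> 'a \<Rightarrow> 'a) \<Rightarrow> 'a set \<Rightarrow> bool" where
  "bi_ideal m B \<longleftrightarrow> B \<noteq> {} \<and> setmult m B B \<subseteq> B
     \<and> setmult m (setmult m B UNIV) B \<subseteq> B"

definition strongly_irreducible :: "('a \<Rightarrow> 'a \<Rightarrow> 'a) \<Rightarrow> 'a set \<Rightarrow> bool" where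
  "strongly_irreducible m B \<longleftrightarrow> bi_ideal m B \<and>
     (\<forall>B1 B2. bi_ideal m B1 \<longrightarrow> bi_ideal m B2 \<longrightarrow> B1 \<inter> B2 \<subseteq> B \<longrightarrow> B1 \<subseteq> B \<or> B2 \<subseteq> B)"

definition gen_bi_ideal :: "('a \<Rightarrow> 'a \<Rightarrow> 'a) \<Rightarrow> 'a set \<Rightarrow> 'a set" where
  "gen_bi_ideal m X = \<Inter>{B. bi_ideal m B \<and> X \<subseteq> B}"

definition bi_ideals :: "('a \<Rightarrow> 'a \<Rightarrow> 'a) \<Rightarrow> 'a set set" where
  "bi_ideals m = {B. bi_ideal m B}"

definition Omega :: "('a \<Rightarrow> 'a \<Rightarrow> 'a) \<Rightarrow> 'a set set" where
  "Omega m = {J. strongly_irreducible m J \<and> J \<noteq> UNIV}"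

definition O_set :: "('a \<Rightarrow> 'a \<Rightarrow> 'a) \<Rightarrow> 'a set \<Rightarrow> 'a set set" where
  "O_set m B = {J \<in> Omega m. \<not> B \<subseteq> J}"

definition Gamma :: "('a \<Rightarrow> 'a \<Rightarrow> 'a) \<Rightarrow> 'a set set set" where
  "Gamma m = O_set m ` bi_ideals m"

definition topology_on :: "'b set \<Rightarrow> 'b set set \<Rightarrow> bool" where
  "topology_on X T \<longleftrightarrow> T \<subseteq> Pow X \<and> X \<in> T \<and> istopology (\<lambda>U. U \<in> T)"

end

theory Submission
  imports Defs
begin

lemma zero_in_bi:
  assumes "is_zero m z" "bi_ideal m B" shows "z \<in> B"
proof -
  obtain b where b: "b \<in> B" using assms(2) unfolding bi_ideal_def by blast
  have "m (m b z) b \<in> setmult m (setmult m B UNIV) B"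
    unfolding setmult_def using b by blast
  moreover have "m (m b z) b = z" using assms(1) unfolding is_zero_def by simp
  moreover have "setmult m (setmult m B UNIV) B \<subseteq> B" using assms(2) unfolding bi_ideal_def by blast
  ultimately show ?thesis by (metis subsetD)
qed

lemma bi_UNIV: "bi_ideal m UNIV" unfolding bi_ideal_def by auto

lemma bi_zero: assumes "is_zero m z" shows "bi_ideal m {z}"
  using assms unfolding bi_ideal_def setmult_def is_zero_def by auto

lemma bi_Inter:
  assumes "is_zero m z" "\<forall>B\<in>F. bi_ideal m B"
  shows "bi_ideal m (\<Inter>F)"
proof -
  have "z \<in> \<Inter>F" using zero_in_bi[OF assms(1)] assms(2) by blast
  moreover have "setmult m (\<Inter>F) (\<Inter>F) \<subseteq> \<Inter>F"
  proof
    fix x assume "x \<in> setmult m (\<Inter>F) (\<Inter>F)"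
    then obtain a b where x: "x = m a b" "a \<in> \<Inter>F" "b \<in> \<Inter>F" unfolding setmult_def by blast
    show "x \<in> \<Inter>F"
    proof
      fix B assume B: "B \<in> F"
      hence "x \<in> setmult m B B" using x unfolding setmult_def by blast
      thus "x \<in> B" using assms(2) B unfolding bi_ideal_def by blast
    qed
  qed
  moreover have "setmult m (setmult m (\<Inter>F) UNIV) (\<Inter>F) \<subseteq> \<Inter>F"
  proof
    fix x assume "x \<in> setmult m (setmult m (\<Inter>F) UNIV) (\<Inter>F)"
    then obtain a s b where x: "x = m (m a s) b" "a \<in> \<Inter>F" "b \<in> \<Inter>F" unfolding setmult_def by blast
    show "x \<in> \<Inter>F"
    proof
      fix B assume B: "B \<in> F"
      hence "x \<in> setmult m (setmult m B UNIV) B" using x unfolding setmult_def by blast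
      thus "x \<in> B" using assms(2) B unfolding bi_ideal_def by blast
    qed
  qed
  ultimately show ?thesis unfolding bi_ideal_def by blast
qed

lemma bi_Int:
  assumes "is_zero m z" "bi_ideal m B1" "bi_ideal m B2"
  shows "bi_ideal m (B1 \<inter> B2)"
  using bi_Inter[OF assms(1), of "{B1,B2}"] assms by auto

lemma gen_bi: assumes "is_zero m z" shows "bi_ideal m (gen_bi_ideal m X)"
  unfolding gen_bi_ideal_def by (rule bi_Inter[OF assms]) auto

lemma O_Int:
  assumes b1: "bi_ideal m B1" and b2: "bi_ideal m B2" shows
  "O_set m (B1 \<inter> B2) = O_set m B1 \<inter> O_set m B2"
proof
  show "O_set m (B1 \<inter> B2) \<subseteq> O_set m B1 \<inter> O_set m B2"
    unfolding O_set_def by auto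
  show "O_set m B1 \<inter> O_set m B2 \<subseteq> O_set m (B1 \<inter> B2)"
  proof
    fix J assume J: "J \<in> O_set m B1 \<inter> O_set m B2"
    hence JO: "J \<in> Omega m" and n1: "\<not> B1 \<subseteq> J" and n2: "\<not> B2 \<subseteq> J"
      unfolding O_set_def by auto
    have "\<not> B1 \<inter> B2 \<subseteq> J"
    proof
      assume "B1 \<inter> B2 \<subseteq> J"
      with JO have "B1 \<subseteq> J \<or> B2 \<subseteq> J"
        unfolding Omega_def strongly_irreducible_def using b1 b2 by blast
      with n1 n2 show False by blast
    qed
    with JO show "J \<in> O_set m (B1 \<inter> B2)" unfolding O_set_def by blast
  qed
qed

lemma O_Union:
  assumes "\<B> \<subseteq> bi_ideals m"
  shows "O_set m (gen_bi_ideal m (\<Union>\<B>)) = (\<Union>B\<in>\<B>. O_set m B)"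
proof -
  have sub: "\<And>B. B \<in> \<B> \<Longrightarrow> B \<subseteq> gen_bi_ideal m (\<Union>\<B>)"
    unfolding gen_bi_ideal_def by blast
  have le: "\<And>J. bi_ideal m J \<Longrightarrow> \<Union>\<B> \<subseteq> J \<Longrightarrow> gen_bi_ideal m (\<Union>\<B>) \<subseteq> J"
    unfolding gen_bi_ideal_def by blast
  show ?thesis
  proof
    show "O_set m (gen_bi_ideal m (\<Union>\<B>)) \<subseteq> (\<Union>B\<in>\<B>. O_set m B)"
    proof
      fix J assume J: "J \<in> O_set m (gen_bi_ideal m (\<Union>\<B>))"
      hence JO: "J \<in> Omega m" and n: "\<not> gen_bi_ideal m (\<Union>\<B>) \<subseteq> J"
        unfolding O_set_def by auto
      have bJ: "bi_ideal m J" using JO unfolding Omega_def strongly_irreducible_def by simp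
      have "\<not> \<Union>\<B> \<subseteq> J" using le[OF bJ] n by blast
      then obtain B where "B \<in> \<B>" "\<not> B \<subseteq> J" by blast
      thus "J \<in> (\<Union>B\<in>\<B>. O_set m B)" using JO unfolding O_set_def by blast
    qed
    show "(\<Union>B\<in>\<B>. O_set m B) \<subseteq> O_set m (gen_bi_ideal m (\<Union>\<B>))"
    proof
      fix J assume "J \<in> (\<Union>B\<in>\<B>. O_set m B)"
      then obtain B where B: "B \<in> \<B>" "J \<in> O_set m B" by blast
      hence "J \<in> Omega m" "\<not> B \<subseteq> J" unfolding O_set_def by auto
      moreover have "B \<subseteq> gen_bi_ideal m (\<Union>\<B>)" using sub[OF B(1)] .
      ultimately show "J \<in> O_set m (gen_bi_ideal m (\<Union>\<B>))" unfolding O_set_def by blast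
    qed
  qed
qed

theorem theorem2:
  fixes m :: "'a \<Rightarrow> 'a \<Rightarrow> 'a" and z :: 'a
  assumes "AG_groupoid m" and "is_zero m z"
  shows "topology_on (Omega m) (Gamma m)
    \<and> (\<forall>B1 \<in> bi_ideals m. \<forall>B2 \<in> bi_ideals m.
          O_set m (B1 \<inter> B2) = O_set m B1 \<inter> O_set m B2)
    \<and> (\<forall>\<B>. \<B> \<subseteq> bi_ideals m \<longrightarrow>
          O_set m (gen_bi_ideal m (\<Union>\<B>)) = (\<Union>B\<in>\<B>. O_set m B))"
proof -
  have sub: "Gamma m \<subseteq> Pow (Omega m)" unfolding Gamma_def O_set_def by blast
  have "O_set m UNIV = Omega m" unfolding O_set_def Omega_def by blast
  moreover have "UNIV \<in> bi_ideals m" unfolding bi_ideals_def using bi_UNIV by simp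
  ultimately have top: "Omega m \<in> Gamma m" unfolding Gamma_def by (metis image_eqI)
  have int: "\<forall>S T. S \<in> Gamma m \<longrightarrow> T \<in> Gamma m \<longrightarrow> S \<inter> T \<in> Gamma m"
  proof (intro allI impI)
    fix S T assume "S \<in> Gamma m" "T \<in> Gamma m"
    then obtain B1 B2 where b: "bi_ideal m B1" "bi_ideal m B2" and st: "S = O_set m B1" "T = O_set m B2"
      unfolding Gamma_def bi_ideals_def by blast
    have "S \<inter> T = O_set m (B1 \<inter> B2)" using st O_Int[OF b] by simp
    moreover have "B1 \<inter> B2 \<in> bi_ideals m" unfolding bi_ideals_def using bi_Int[OF assms(2) b] by simp
    ultimately show "S \<inter> T \<in> Gamma m" unfolding Gamma_def by (metis image_eqI)
  qed
  have un: "\<forall>K. (\<forall>k\<in>K. k \<in> Gamma m) \<longrightarrow> \<Union>K \<in> Gamma m"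
  proof (intro allI impI)
    fix K assume K: "\<forall>k\<in>K. k \<in> Gamma m"
    define BB where "BB = {B \<in> bi_ideals m. O_set m B \<in> K}"
    have "BB \<subseteq> bi_ideals m" unfolding BB_def by blast
    hence "O_set m (gen_bi_ideal m (\<Union>BB)) = (\<Union>B\<in>BB. O_set m B)" by (rule O_Union)
    also have "(\<Union>B\<in>BB. O_set m B) = \<Union>K"
    proof
      show "(\<Union>B\<in>BB. O_set m B) \<subseteq> \<Union>K" unfolding BB_def by blast
      show "\<Union>K \<subseteq> (\<Union>B\<in>BB. O_set m B)"
      proof
        fix x assume "x \<in> \<Union>K"
        then obtain k where k: "k \<in> K" "x \<in> k" by blast
        then obtain B where "B \<in> bi_ideals m" "k = O_set m B" using K unfolding Gamma_def by blast
        thus "x \<in> (\<Union>B\<in>BB. O_set m B)" using k unfolding BB_def by blast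
      qed
    qed
    finally have e: "\<Union>K = O_set m (gen_bi_ideal m (\<Union>BB))" by simp
    have "gen_bi_ideal m (\<Union>BB) \<in> bi_ideals m" unfolding bi_ideals_def using gen_bi[OF assms(2)] by simp
    thus "\<Union>K \<in> Gamma m" unfolding Gamma_def e by (metis image_eqI)
  qed
  have "topology_on (Omega m) (Gamma m)"
    unfolding topology_on_def istopology_def using sub top int un by simp
  moreover have "\<forall>B1 \<in> bi_ideals m. \<forall>B2 \<in> bi_ideals m.
          O_set m (B1 \<inter> B2) = O_set m B1 \<inter> O_set m B2" unfolding bi_ideals_def by (intro ballI) (rule O_Int, auto)
  moreover have "\<forall>\<B>. \<B> \<subseteq> bi_ideals m \<longrightarrow>
          O_set m (gen_bi_ideal m (\<Union>\<B>)) = (\<Union>B\<in>\<B>. O_set m B)" by (intro allI impI) (rule O_Union)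
  ultimately show ?thesis by blast
qed

end
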